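(* Let $n_0,n_1\ge 0$ and $m$ be integers with $0<m\le n_0+n_1$, and let $X\sim\mathrm{Hyper}(n_0,n_1;m)$, i.e. $$\mathbb P(X=k)=\frac{\binom{n_0}{k}\binom{n_1}{m-k}}{\binom{n_0+n_1}{m}}.$$ Set $Y=X/(1+m-X)$. Then $$\mathbb E Y=\frac{n_0}{1+n_1}\left(1-\frac{\binom{n_0-1}{m}}{\binom{n_0+n_1}{m}}\right).$$ In particular, $\mathbb E Y\le \frac{n_0}{1+n_1}$ for every such $m$.
   Context: Binomial coefficient conventions: $\binom{0}{0}=1$, and $\binom{n}{k}=0$ if $n<0$, or if $k<0$, or if $k>n$. *)

theory Defs
  imports Complex_Main
begin

definition ibinom :: "int \<Rightarrow> int \<Rightarrow> real" where
  "ibinom n k = (if n < 0 \<or> k < 0 \<or> k > n then 0 else real (nat n choose nat k))"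

definition hyper_pmf :: "int \<Rightarrow> int \<Rightarrow> int \<Rightarrow> int \<Rightarrow> real" where
  "hyper_pmf n0 n1 m k = ibinom n0 k * ibinom n1 (m - k) / ibinom (n0 + n1) m"

definition hyper_EY :: "int \<Rightarrow> int \<Rightarrow> int \<Rightarrow> real" where
  "hyper_EY n0 n1 m = (\<Sum>k\<in>{0..m}. hyper_pmf n0 n1 m k * (real_of_int k / (1 + real_of_int m - real_of_int k)))"

end

theory Submission
  imports Defs
begin

lemma term_id:
  fixes a b M k :: nat assumes "1 \<le> k" "k \<le> M"
  shows "(b+1) * (k * (a choose k) * (b choose (M-k))) = a * ((a-1) choose (k-1)) * ((b+1) choose (M+1-k)) * (M+1-k)"
proof -
  have 1: "k * (a choose k) = a * ((a-1) choose (k-1))" using assms times_binomial_minus1_eq by auto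
  have 2: "(b+1) * (b choose (M-k)) = ((b+1) choose (M+1-k)) * (M+1-k)"
    using Suc_times_binomial_eq[of b "M-k"] assms by (simp add: Suc_diff_le)
  have "(b+1) * (k * (a choose k) * (b choose (M-k))) = (k * (a choose k)) * ((b+1) * (b choose (M-k)))" by (simp add: algebra_simps)
  also have "\<dots> = a * ((a-1) choose (k-1)) * (((b+1) choose (M+1-k)) * (M+1-k))" using 1 2 by simp
  finally show ?thesis by (simp add: algebra_simps)
qed

lemma sum_id:
  fixes a b M :: nat assumes "1 \<le> a"
  shows "(\<Sum>k\<in>{1..M}. ((a-1) choose (k-1)) * ((b+1) choose (M+1-k))) + ((a-1) choose M) = (a+b) choose M"
proof -
  have "(\<Sum>k\<in>{1..M}. ((a-1) choose (k-1)) * ((b+1) choose (M+1-k))) = (\<Sum>j<M. ((a-1) choose j) * ((b+1) choose (M-j)))"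
  proof -
    have "(\<Sum>k\<in>{1..M}. ((a-1) choose (k-1)) * ((b+1) choose (M+1-k))) = (\<Sum>j\<in>{0..<M}. ((a-1) choose j) * ((b+1) choose (M+1-Suc j)))"
      by (rule sum.reindex_bij_witness[where i=Suc and j="\<lambda>k. k-1"]) auto
    also have "\<dots> = (\<Sum>j<M. ((a-1) choose j) * ((b+1) choose (M-j)))"
      by (intro sum.cong) (auto simp: Suc_diff_le)
    finally show ?thesis .
  qed
  also have "\<dots> + ((a-1) choose M) = (\<Sum>j\<le>M. ((a-1) choose j) * ((b+1) choose (M-j)))"
    by (simp add: lessThan_Suc_atMost[symmetric])
  also have "\<dots> = ((a-1)+(b+1)) choose M" by (rule vandermonde)
  also have "(a-1)+(b+1) = a+b" using assms by simp
  finally show ?thesis .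
qed

theorem lemma2:
  fixes n0 n1 m :: int
  assumes "n0 \<ge> 0" and "n1 \<ge> 0" and "0 < m" and "m \<le> n0 + n1"
  shows "hyper_EY n0 n1 m
           = real_of_int n0 / (1 + real_of_int n1) * (1 - ibinom (n0 - 1) m / ibinom (n0 + n1) m)
         \<and> hyper_EY n0 n1 m \<le> real_of_int n0 / (1 + real_of_int n1)"
proof -
  define a where "a = nat n0"
  define b where "b = nat n1"
  define M where "M = nat m"
  have n0: "n0 = int a" and n1: "n1 = int b" and mM: "m = int M" and M1: "1 \<le> M" and Mab: "M \<le> a + b"
    using assms by (auto simp: a_def b_def M_def)
  define C where "C = real ((a+b) choose M)"
  have C: "ibinom (n0+n1) m = C" using Mab by (simp add: ibinom_def C_def n0 n1 mM nat_add_distrib)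
  have Cpos: "C > 0" using Mab by (simp add: C_def)
  define D where "D = (if a \<ge> 1 then real ((a-1) choose M) else 0)"
  have D: "ibinom (n0-1) m = D" by (auto simp: ibinom_def D_def n0 mM nat_diff_distrib)
  have Dnn: "D \<ge> 0" by (simp add: D_def)
  define S where "S = (\<Sum>k\<in>{1..M}. ((a-1) choose (k-1)) * ((b+1) choose (M+1-k)))"
  define f where "f k = real (a choose k) * real (b choose (M-k)) / C * (real k / (1 + real M - real k))" for k
  have EY: "hyper_EY n0 n1 m = (\<Sum>k\<in>{0..M}. f k)"
  proof -
    have img: "{0..m} = int ` {0..M}" unfolding mM
      by (auto simp: image_iff intro!: bexI[where x="nat _"])
    have r: "(\<Sum>k\<in>int ` {0..M}. g k) = (\<Sum>k\<in>{0..M}. g (int k))" for g :: "int \<Rightarrow> real"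
      by (simp add: sum.reindex)
    have "hyper_EY n0 n1 m = (\<Sum>k\<in>{0..M}. hyper_pmf n0 n1 m (int k) * (real_of_int (int k) / (1 + real_of_int m - real_of_int (int k))))"
      unfolding hyper_EY_def img by (rule r)
    also have "\<dots> = (\<Sum>k\<in>{0..M}. f k)"
    proof (intro sum.cong refl)
      fix k assume k: "k \<in> {0..M}"
      have "ibinom n0 (int k) = real (a choose k)" by (simp add: ibinom_def n0)
      moreover have "ibinom n1 (m - int k) = real (b choose (M-k))"
        using k by (auto simp: ibinom_def n1 mM nat_diff_distrib of_nat_diff)
      ultimately show "hyper_pmf n0 n1 m (int k) * (real_of_int (int k) / (1 + real_of_int m - real_of_int (int k))) = f k"
        unfolding hyper_pmf_def C by (simp add: f_def mM)
    qed
    finally show ?thesis .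
  qed
  have "(real b + 1) * C * (\<Sum>k\<in>{0..M}. f k) = (\<Sum>k\<in>{1..M}. (real b + 1) * C * f k)"
  proof -
    have "{0..M} = insert 0 {1..M}" by auto
    then show ?thesis by (simp add: sum_distrib_left f_def)
  qed
  also have "\<dots> = (\<Sum>k\<in>{1..M}. real a * real (((a-1) choose (k-1)) * ((b+1) choose (M+1-k))))"
  proof (intro sum.cong refl)
    fix k assume k: "k \<in> {1..M}"
    have pos: "1 + real M - real k > 0" using k by simp
    have eq: "real (M+1-k) = 1 + real M - real k" using k by (simp add: of_nat_diff)
    have "real ((b+1) * (k * (a choose k) * (b choose (M-k)))) = real (a * ((a-1) choose (k-1)) * ((b+1) choose (M+1-k)) * (M+1-k))"
      using term_id[of k M b a] k by simp
    hence h: "(real b + 1) * (real k * real (a choose k) * real (b choose (M-k))) = real a * real ((a-1) choose (k-1)) * real ((b+1) choose (M+1-k)) * (1 + real M - real k)"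
      by (simp only: of_nat_mult eq of_nat_add of_nat_1)
    have "(real b + 1) * C * f k = (real b + 1) * (real k * real (a choose k) * real (b choose (M-k))) / (1 + real M - real k)"
      using Cpos pos unfolding f_def by (simp add: mult_ac)
    also have "\<dots> = real a * real ((a-1) choose (k-1)) * real ((b+1) choose (M+1-k))"
      unfolding h using pos by simp
    finally show "(real b + 1) * C * f k = real a * real (((a-1) choose (k-1)) * ((b+1) choose (M+1-k)))"
      by simp
  qed
  also have "\<dots> = real a * real S" by (simp add: S_def sum_distrib_left)
  finally have key: "(real b + 1) * C * hyper_EY n0 n1 m = real a * real S" using EY by simp
  have aS: "real a * real S = real a * (C - D)"
  proof (cases "a \<ge> 1")
    case True
    have "S + ((a-1) choose M) = (a+b) choose M" using sum_id[OF True, of b M] unfolding S_def .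
    hence "real (S + ((a-1) choose M)) = C" unfolding C_def by (rule arg_cong)
    hence "real S + real ((a-1) choose M) = C" by (simp only: of_nat_add)
    hence hS: "real S = C - D" using True unfolding D_def by simp
    show ?thesis by (simp only: hS)
  next
    case False then show ?thesis by simp
  qed
  have bC: "(real b + 1) * C > 0" using Cpos by simp
  have "hyper_EY n0 n1 m = real a * (C - D) / ((real b + 1) * C)"
    using key aS bC Cpos by (simp add: eq_divide_eq mult.commute)
  also have "\<dots> = real a / (1 + real b) * (1 - D / C)"
  proof -
    have h: "1 - D / C = (C - D) / C" using Cpos by (simp add: diff_divide_distrib)
    show ?thesis unfolding h by (simp add: add.commute mult.commute)
  qed
  finally have eq1: "hyper_EY n0 n1 m = real a / (1 + real b) * (1 - D / C)" .
  have "D / C \<ge> 0" using Dnn Cpos by simp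
  hence "real a / (1 + real b) * (1 - D / C) \<le> real a / (1 + real b)"
    by (intro mult_left_le) auto
  then show ?thesis using eq1 unfolding C D by (simp add: n0 n1)
qed

end
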